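(* Over the class of serial models (models in which every world has at least one $R$-successor): (1) the formula $[\ddagger^{\ast}(p\land q)](\lnot\Box p\land\lnot\Box q)$ is true at every world of every serial model; but (2) the formula $[\ddagger(p\land q)](\lnot\Box p\land\lnot\Box q)$ is not true at every world of every serial model. Here $p,q$ are distinct atoms.
   Context: Fix a countable non-empty set $\mathit{At}$ of atoms. Formulas are built from $\top$, atoms, $\lnot$, $\land$, $\Box$ and, for propositional $\pi$, operators $[\ddagger\pi]$ and $[\ddagger^{\ast}\pi]$. A model is $\mathcal{M}=\langle W,R,V\rangle$, $W\neq\varnothing$, $R\subseteq W\times W$, $V:\mathit{At}\to\mathcal{P}(W)$, standard Kripke semantics for $\Box$. A literal is an atom or its negation; a clause is a finite set $D$ of literals read as $\bigvee D$ ($\bigvee\varnothing:=\bot$), tautological if it contains $p$ and $\lnot p$ for some $p$. For propositional $\pi$, $\mathcal{C}(\pi)$ is the set of non-tautological clauses $D$ with $\models\pi\to\bigvee D$ and no $D'\subsetneq D$ with $\models\pi\to\bigvee D'$. For a model $\mathcal{M}$ and a finite family $(D_i)_{i\in I}$ of non-tautological clauses with $0\notin I$, $\mathcal{M}^{(D_i)_{i\in I}}_u=\langle W',R',V'\rangle$ has $W'=W\times(\{0\}\cup I)$, $(w,i)R'(v,j)$ iff $wRv$, $(w,0)\in V'(p)$ iff $w\in V(p)$, and for $i\in I$: $(w,i)\in V'(p)$ iff $\lnot p\in D_i$, or $\{p,\lnot p\}\cap D_i=\varnothing$ and $w\in V(p)$. Semantics: $\mathcal{M},w\models[\ddagger\pi]\varphi$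 iff for all $D_1\in\mathcal{C}(\pi)$, $D_2\in\mathcal{C}(\lnot\pi)$, $\mathcal{M}^{(D_1,D_2)}_u,(w,0)\models\varphi$ (indexed by $I=\{1,2\}$). Strong forgetting whether: $\mathcal{M},w\models[\ddagger^{\ast}\pi]\varphi$ iff $\mathcal{M}^{\mathcal{C}(\pi)\cup\mathcal{C}(\lnot\pi)}_u,(w,0)\models\varphi$, where the family is the set $\mathcal{C}(\pi)\cup\mathcal{C}(\lnot\pi)$ indexed by itself (one new copy of $W$ per clause). *)

theory Defs
  imports "HOL-Library.Countable"
begin

datatype 'a pf = PTop | PAt 'a | PNeg "'a pf" | PConj "'a pf" "'a pf"

fun peval :: "('a \<Rightarrow> bool) \<Rightarrow> 'a pf \<Rightarrow> bool" where
  "peval v PTop = True"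
| "peval v (PAt p) = v p"
| "peval v (PNeg a) = (\<not> peval v a)"
| "peval v (PConj a b) = (peval v a \<and> peval v b)"

text \<open>A literal is a pair (p, b): (p, True) is the atom p, (p, False) is its negation.
  A clause is a finite set of literals, read as their disjunction.\<close>

type_synonym 'a clause = "('a \<times> bool) set"

definition tautological :: "'a clause \<Rightarrow> bool" where
  "tautological D \<longleftrightarrow> (\<exists>p. (p, True) \<in> D \<and> (p, False) \<in> D)"

definition entails_clause :: "'a pf \<Rightarrow> 'a clause \<Rightarrow> bool" where
  "entails_clause \<pi> D \<longleftrightarrow> (\<forall>v. peval v \<pi> \<longrightarrow> (\<exists>(p, b) \<in> D. v p = b))"

definition Cl_set :: "'a pf \<Rightarrow> 'a clause set" where
  "Cl_set \<pi> = {D. finite D \<and> \<not> tautological D \<and> entails_clause \<pi> D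
                 \<and> (\<forall>D'. D' \<subset> D \<longrightarrow> \<not> entails_clause \<pi> D')}"

datatype 'a fm = Top | At 'a | Neg "'a fm" | Conj "'a fm" "'a fm" | Box "'a fm"
  | Forget "'a pf" "'a fm"
  | ForgetS "'a pf" "'a fm"

record ('a, 'w) model =
  W :: "'w set"
  R :: "('w \<times> 'w) set"
  V :: "'a \<Rightarrow> 'w set"

definition is_model :: "('a, 'w) model \<Rightarrow> bool" where
  "is_model M \<longleftrightarrow> W M \<noteq> {} \<and> R M \<subseteq> W M \<times> W M \<and> (\<forall>p. V M p \<subseteq> W M)"

definition serial :: "('a, 'w) model \<Rightarrow> bool" where
  "serial M \<longleftrightarrow> (\<forall>w \<in> W M. \<exists>v. (w, v) \<in> R M)"

text \<open>Indices of copies: Zero is the index 0 (original copy); Num n and Cl D are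
  the indices used for the families of [\<ddagger>pi] (indexed by {1,2}) and [\<ddagger>* pi]
  (indexed by the clauses themselves). To allow iterated updates inside one HOL type,
  worlds of updated models are pairs (w, xs) where xs records the sequence of copy
  indices; an update replaces (w, xs) by (w, xs @ [i]).\<close>

datatype 'a idx = Zero | Num nat | Cl "'a clause"

type_synonym ('a, 'w) umodel = "('a, 'w \<times> 'a idx list) model"

text \<open>The update M^{(D_i)_{i \<in> I}}_u, for an index set I not containing Zero.\<close>
definition upd :: "('a, 'w) umodel \<Rightarrow> 'a idx set \<Rightarrow> ('a idx \<Rightarrow> 'a clause) \<Rightarrow> ('a, 'w) umodel" where
  "upd M I D =
    \<lparr> W = {(w, xs @ [i]) | w xs i. (w, xs) \<in> W M \<and> i \<in> insert Zero I},
      R = {((w, xs @ [i]), (v, ys @ [j])) | w xs i v ys j.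
              ((w, xs), (v, ys)) \<in> R M \<and> i \<in> insert Zero I \<and> j \<in> insert Zero I},
      V = (\<lambda>p. {(w, xs @ [Zero]) | w xs. (w, xs) \<in> V M p}
             \<union> {(w, xs @ [i]) | w xs i. (w, xs) \<in> W M \<and> i \<in> I \<and>
                   ((p, False) \<in> D i \<or>
                    ((p, True) \<notin> D i \<and> (p, False) \<notin> D i \<and> (w, xs) \<in> V M p))}) \<rparr>"

fun sat :: "('a, 'w) umodel \<Rightarrow> 'w \<times> 'a idx list \<Rightarrow> 'a fm \<Rightarrow> bool" where
  "sat M x Top = True"
| "sat M x (At p) = (x \<in> V M p)"
| "sat M x (Neg \<phi>) = (\<not> sat M x \<phi>)"
| "sat M x (Conj \<phi> \<psi>) = (sat M x \<phi> \<and> sat M x \<psi>)"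
| "sat M x (Box \<phi>) = (\<forall>y. (x, y) \<in> R M \<longrightarrow> sat M y \<phi>)"
| "sat M x (Forget \<pi> \<phi>) =
     (\<forall>D1 \<in> Cl_set \<pi>. \<forall>D2 \<in> Cl_set (PNeg \<pi>).
        sat (upd M {Num 1, Num 2} (\<lambda>i. if i = Num 1 then D1 else D2)) (fst x, snd x @ [Zero]) \<phi>)"
| "sat M x (ForgetS \<pi> \<phi>) =
     sat (upd M (Cl ` (Cl_set \<pi> \<union> Cl_set (PNeg \<pi>))) (\<lambda>i. case i of Cl D \<Rightarrow> D | _ \<Rightarrow> {}))
         (fst x, snd x @ [Zero]) \<phi>"

definition lift :: "('a, 'w) model \<Rightarrow> ('a, 'w) umodel" where
  "lift M = \<lparr> W = {(w, []) | w. w \<in> W M},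
              R = {((w, []), (v, [])) | w v. (w, v) \<in> R M},
              V = (\<lambda>p. {(w, []) | w. w \<in> V M p}) \<rparr>"

definition holds_at :: "('a, 'w) model \<Rightarrow> 'w \<Rightarrow> 'a fm \<Rightarrow> bool" where
  "holds_at M w \<phi> \<longleftrightarrow> sat (lift M) (w, []) \<phi>"

definition serial_valid :: "'w itself \<Rightarrow> 'a fm \<Rightarrow> bool" where
  "serial_valid _ \<phi> \<longleftrightarrow> (\<forall>M :: ('a, 'w) model. is_model M \<and> serial M \<longrightarrow> (\<forall>w \<in> W M. holds_at M w \<phi>))"

end

theory Submission
  imports Defs
begin

lemma ent_mono: "entails_clause \<pi> D \<Longrightarrow> D \<subseteq> D' \<Longrightarrow> entails_clause \<pi> D'"
  unfolding entails_clause_def by blast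

lemma cl_p: "{(p,True)} \<in> Cl_set (PConj (PAt p) (PAt q))"
proof -
  have "\<not> entails_clause (PConj (PAt p) (PAt q)) {}"
    unfolding entails_clause_def by (auto intro: exI[of _ "\<lambda>_. True"])
  moreover have "D' \<subset> {(p,True)} \<Longrightarrow> D' = {}" for D' :: "('a\<times>bool) set" by blast
  ultimately show ?thesis
    unfolding Cl_set_def tautological_def entails_clause_def by auto
qed

lemma cl_q: "{(q,True)} \<in> Cl_set (PConj (PAt p) (PAt q))"
proof -
  have "\<not> entails_clause (PConj (PAt p) (PAt q)) {}"
    unfolding entails_clause_def by (auto intro: exI[of _ "\<lambda>_. True"])
  moreover have "D' \<subset> {(q,True)} \<Longrightarrow> D' = {}" for D' :: "('a\<times>bool) set" by blast
  ultimately show ?thesis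
    unfolding Cl_set_def tautological_def entails_clause_def by auto
qed

lemma cl_neg:
  assumes "p \<noteq> q"
  shows "{(p,False),(q,False)} \<in> Cl_set (PNeg (PConj (PAt p) (PAt q)))"
proof -
  let ?pi = "PNeg (PConj (PAt p) (PAt q))"
  have a: "\<not> entails_clause ?pi {(p,False)}"
    unfolding entails_clause_def using assms
    by (auto intro!: exI[of _ "\<lambda>x. x = p"])
  have b: "\<not> entails_clause ?pi {(q,False)}"
    unfolding entails_clause_def using assms
    by (auto intro!: exI[of _ "\<lambda>x. x = q"])
  have c: "D' \<subset> {(p,False),(q,False)} \<Longrightarrow> D' \<subseteq> {(p,False)} \<or> D' \<subseteq> {(q,False)}"
    for D' :: "('a\<times>bool) set" by blast
  have "\<forall>D'. D' \<subset> {(p,False),(q,False)} \<longrightarrow> \<not> entails_clause ?pi D'"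
    using a b c ent_mono by metis
  moreover have "entails_clause ?pi {(p,False),(q,False)}"
    unfolding entails_clause_def by auto
  moreover have "\<not> tautological {(p,False),(q,False)}"
    unfolding tautological_def by auto
  ultimately show ?thesis unfolding Cl_set_def by auto
qed

theorem proposition8:
  fixes p q :: "'a::countable"
  assumes "p \<noteq> q"
  shows "serial_valid TYPE('w)
           (ForgetS (PConj (PAt p) (PAt q)) (Conj (Neg (Box (At p))) (Neg (Box (At q)))))
       \<and> \<not> serial_valid TYPE('w)
           (Forget (PConj (PAt p) (PAt q)) (Conj (Neg (Box (At p))) (Neg (Box (At q)))))"
proof
  show "serial_valid TYPE('w)
           (ForgetS (PConj (PAt p) (PAt q)) (Conj (Neg (Box (At p))) (Neg (Box (At q)))))"
    unfolding serial_valid_def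
  proof (intro allI impI ballI)
    fix M :: "('a,'w) model" and w
    assume "is_model M \<and> serial M" and w: "w \<in> W M"
    then obtain v where v: "(w,v) \<in> R M" unfolding serial_def by blast
    let ?I = "Cl ` (Cl_set (PConj (PAt p) (PAt q)) \<union> Cl_set (PNeg (PConj (PAt p) (PAt q))))"
    let ?D = "\<lambda>i. case i of Cl D \<Rightarrow> D | _ \<Rightarrow> {}"
    let ?N = "upd (lift M) ?I ?D"
    have Ip: "Cl {(p,True)} \<in> ?I" by (rule imageI, rule UnI1, rule cl_p)
    have Iq: "Cl {(q,True)} \<in> ?I" by (rule imageI, rule UnI1, rule cl_q)
    have Rv: "((w::'w,[]),(v,[])) \<in> R (lift M)" using v unfolding lift_def by auto
    have r1: "((w,[Zero]),(v,[Cl {(p,True)}])) \<in> R ?N"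
      unfolding upd_def using Rv Ip by simp
    have r2: "((w,[Zero]),(v,[Cl {(q,True)}])) \<in> R ?N"
      unfolding upd_def using Rv Iq by simp
    have n1: "(v,[Cl {(p,True)}]) \<notin> V ?N p"
      unfolding upd_def by auto
    have n2: "(v,[Cl {(q,True)}]) \<notin> V ?N q"
      unfolding upd_def by auto
    show "holds_at M w (ForgetS (PConj (PAt p) (PAt q)) (Conj (Neg (Box (At p))) (Neg (Box (At q)))))"
      unfolding holds_at_def using r1 r2 n1 n2 by auto
  qed
next
  show "\<not> serial_valid TYPE('w)
           (Forget (PConj (PAt p) (PAt q)) (Conj (Neg (Box (At p))) (Neg (Box (At q)))))"
  proof
    assume H: "serial_valid TYPE('w)
           (Forget (PConj (PAt p) (PAt q)) (Conj (Neg (Box (At p))) (Neg (Box (At q)))))"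
    define w0 :: 'w where "w0 = undefined"
    define M :: "('a,'w) model" where "M = \<lparr> W = {w0}, R = {(w0,w0)}, V = (\<lambda>_. {w0}) \<rparr>"
    have "is_model M \<and> serial M" unfolding M_def is_model_def serial_def by auto
    hence "holds_at M w0
       (Forget (PConj (PAt p) (PAt q)) (Conj (Neg (Box (At p))) (Neg (Box (At q)))))"
      using H unfolding serial_valid_def M_def by auto
    hence S: "sat (upd (lift M) {Num 1, Num 2}
          (\<lambda>i. if i = Num 1 then {(p,True)} else {(p,False),(q,False)})) (w0,[Zero])
          (Conj (Neg (Box (At p))) (Neg (Box (At q))))"
    proof -
      assume h: "holds_at M w0
       (Forget (PConj (PAt p) (PAt q)) (Conj (Neg (Box (At p))) (Neg (Box (At q)))))"
      have "\<forall>D1 \<in> Cl_set (PConj (PAt p) (PAt q)). \<forall>D2 \<in> Cl_set (PNeg (PConj (PAt p) (PAt q))).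
        sat (upd (lift M) {Num 1, Num 2} (\<lambda>i. if i = Num 1 then D1 else D2)) (w0, [] @ [Zero])
          (Conj (Neg (Box (At p))) (Neg (Box (At q))))"
        using h unfolding holds_at_def sat.simps(6) fst_conv snd_conv .
      from bspec[OF bspec[OF this cl_p] cl_neg[OF assms]] show ?thesis by simp
    qed
    have "sat (upd (lift M) {Num 1, Num 2}
          (\<lambda>i. if i = Num 1 then {(p,True)} else {(p,False),(q,False)})) (w0,[Zero])
          (Box (At q))"
      using assms unfolding upd_def lift_def M_def by auto
    thus False using S by simp
  qed
qed

end
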